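(* For any $M\in\mathbb{N}$ and any $\delta>0$, there exists a $\textsc{ReLU}$ network $f:\mathbb R\rightarrow\mathbb R^2$ of width $2$ such that for all $x\in[0,1]\setminus\mathcal D_{M,\delta}$, $$f(x)=\big(q_M(x),\ 2^M\,(x-q_M(x))\big),$$ where $\mathcal D_{M,\delta}:=\bigcup_{i=1}^{2^M-1}(i\cdot2^{-M}-\delta,\ i\cdot 2^{-M})$. Furthermore, $f(\mathbb R)\subset[0,1-2^{-M}]\times[0,1]$.
   Context: $\mathcal C_M:=\{0,2^{-M},2\cdot2^{-M},\dots,1-2^{-M}\}$ and $q_M:[0,1]\to\mathcal C_M$, $q_M(x)=\max\{c\in\mathcal C_M:c\le x\}$. A $\textsc{ReLU}$ network is $t_L\circ\sigma_{L-1}\circ\cdots\circ\sigma_1\circ t_1$ with affine $t_\ell:\mathbb R^{d_{\ell-1}}\to\mathbb R^{d_\ell}$ and coordinatewise $\textsc{ReLU}$ $\sigma_\ell$; its width is $\max\{d_1,\dots,d_{L-1}\}$. *)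

theory Defs
  imports Complex_Main
begin

definition grid :: "nat \<Rightarrow> real set" where
  "grid M = {real k / 2 ^ M | k. k < 2 ^ M}"

definition qM :: "nat \<Rightarrow> real \<Rightarrow> real" where
  "qM M x = Max {c \<in> grid M. c \<le> x}"

definition Dset :: "nat \<Rightarrow> real \<Rightarrow> real set" where
  "Dset M \<delta> = (\<Union>i\<in>{1..2 ^ M - 1::nat}. {real i / 2 ^ M - \<delta> <..< real i / 2 ^ M})"

text \<open>Vectors in R^d are functions nat => real, only indices < d matter.
  A layer is an affine map t : R^{d_in} -> R^{d_out}, recorded as (d_in, W, b), computing
  (t v) i = (sum j<d_in. W i j * v j) + b i.  A network is the list [t_1, ..., t_L] of its
  affine maps; its realization is t_L o sigma o ... o sigma o t_1.\<close>
type_synonym layer = "nat \<times> (nat \<Rightarrow> nat \<Rightarrow> real) \<times> (nat \<Rightarrow> real)"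

definition affine_app :: "layer \<Rightarrow> (nat \<Rightarrow> real) \<Rightarrow> (nat \<Rightarrow> real)" where
  "affine_app l v = (case l of (d, W, b) \<Rightarrow> (\<lambda>i. (\<Sum>j<d. W i j * v j) + b i))"

definition relu_vec :: "(nat \<Rightarrow> real) \<Rightarrow> (nat \<Rightarrow> real)" where
  "relu_vec v = (\<lambda>i. max 0 (v i))"

fun run_net :: "layer list \<Rightarrow> (nat \<Rightarrow> real) \<Rightarrow> (nat \<Rightarrow> real)" where
  "run_net [] v = v"
| "run_net [l] v = affine_app l v"
| "run_net (l # l' # ls) v = run_net (l' # ls) (relu_vec (affine_app l v))"

definition in_dim :: "layer list \<Rightarrow> nat" where
  "in_dim N = fst (hd N)"

text \<open>Width = max of the hidden dimensions d_1, ..., d_{L-1}, i.e. the input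
  dimensions of the layers t_2, ..., t_L.\<close>
definition width :: "layer list \<Rightarrow> nat" where
  "width N = foldr max (map fst (tl N)) 0"

definition realize2 :: "layer list \<Rightarrow> real \<Rightarrow> real \<times> real" where
  "realize2 N x = (let y = run_net N (\<lambda>i. if i = 0 then x else 0) in (y 0, y 1))"

end

theory Submission
  imports Defs
begin

fun itr :: "(real \<times> real \<times> real) list \<Rightarrow> real \<Rightarrow> real \<Rightarrow> real" where
  "itr [] z t = t"
| "itr ((s,a,b) # os) z t = itr os z (max 0 (s * t + a * z + b))"

lemma itr_append: "itr (xs @ ys) z t = itr ys z (itr xs z t)"
  by (induction xs arbitrary: t) auto

definition mnops :: "real \<Rightarrow> real \<Rightarrow> (real \<times> real \<times> real) list" where
  "mnops a b = [(-1,a,b),(-1,a,b)]"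
definition mxops :: "real \<Rightarrow> real \<Rightarrow> (real \<times> real \<times> real) list" where
  "mxops a b = [(1,-a,-b),(1,a,b)]"

lemma itr_mn: "itr (mnops a b) z t = max 0 (min (a*z+b) t)"
  unfolding mnops_def by (auto simp: max_def min_def)

lemma itr_mx: "itr (mxops a b) z t = max 0 (max (a*z+b) t)"
  unfolding mxops_def by (auto simp: max_def min_def)

definition opl :: "real \<times> real \<times> real \<Rightarrow> layer" where
  "opl p = (case p of (s,a,b) \<Rightarrow> (2, \<lambda>i j. if i = 0 then (if j = 0 then 1 else 0)
       else if i = 1 then (if j = 0 then a else s) else 0, \<lambda>i. if i = 1 then b else 0))"

definition finl :: "nat \<Rightarrow> layer" where
  "finl M = (2, \<lambda>i j. if i = 0 then (if j = 0 then 1 else -1)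
       else if i = 1 then (if j = 0 then 0 else 2^M) else 0, \<lambda>i. 0)"

definition L1 :: layer where
  "L1 = (1, \<lambda>i j. if i \<le> 1 then 1 else 0, \<lambda>i. if i = 1 then -1 else 0)"

definition L2 :: layer where
  "L2 = (2, \<lambda>i j. if i \<le> 1 then (if j = 0 then 1 else -1) else 0, \<lambda>i. 0)"

lemma run_net_cons: "ls \<noteq> [] \<Longrightarrow> run_net (l # ls) v = run_net ls (relu_vec (affine_app l v))"
  by (cases ls) auto

lemma run_ops:
  assumes "v 0 \<ge> 0"
  shows "run_net (map opl os @ [finl M]) v 0 = v 0 - itr os (v 0) (v 1) \<and>
         run_net (map opl os @ [finl M]) v 1 = 2^M * itr os (v 0) (v 1)"
  using assms
proof (induction os arbitrary: v)
  case Nil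
  then show ?case by (simp add: finl_def affine_app_def lessThan_Suc numeral_2_eq_2)
next
  case (Cons p os)
  obtain s a b where o: "p = (s,a,b)" by (cases p) auto
  define w where "w = relu_vec (affine_app (opl p) v)"
  have w0: "w 0 = v 0" using Cons.prems
    by (simp add: w_def relu_vec_def affine_app_def opl_def o lessThan_Suc numeral_2_eq_2)
  have w1: "w 1 = max 0 (s * v 1 + a * v 0 + b)"
    by (simp add: w_def relu_vec_def affine_app_def opl_def o lessThan_Suc numeral_2_eq_2 algebra_simps)
  have "run_net (map opl (p # os) @ [finl M]) v = run_net (map opl os @ [finl M]) w"
    by (simp add: run_net_cons w_def)
  then show ?case using Cons.IH[of w] w0 w1 Cons.prems by (simp add: o)
qed

definition cc :: "nat \<Rightarrow> nat \<Rightarrow> real" where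
  "cc M k = real k / 2^M"

definition KK :: "nat \<Rightarrow> real \<Rightarrow> real" where
  "KK M \<delta> = (1 / 2^M) / \<delta>"

definition stepf :: "nat \<Rightarrow> real \<Rightarrow> real \<Rightarrow> real \<Rightarrow> nat \<Rightarrow> real" where
  "stepf M \<delta> z t k = max 0 (max (z - cc M k) (max 0 (min (KK M \<delta> * (cc M k - z)) t)))"

definition opsk :: "nat \<Rightarrow> real \<Rightarrow> nat \<Rightarrow> (real \<times> real \<times> real) list" where
  "opsk M \<delta> k = mnops (- KK M \<delta>) (KK M \<delta> * cc M k) @ mxops 1 (- cc M k)"

lemma itr_opsk: "itr (opsk M \<delta> k @ rest) z t = itr rest z (stepf M \<delta> z t k)"
  unfolding opsk_def stepf_def by (simp add: itr_append itr_mn itr_mx algebra_simps)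

lemma itr_concat: "itr (concat (map (opsk M \<delta>) ks) @ rest) z t = itr rest z (foldl (stepf M \<delta> z) t ks)"
  by (induction ks arbitrary: t) (simp_all add: itr_opsk)

definition clops :: "nat \<Rightarrow> (real \<times> real \<times> real) list" where
  "clops M = mxops 1 (-(1 - 1/2^M)) @ mnops 1 0 @ mnops 0 (1/2^M)"

lemma itr_clops: "itr (clops M) z t = max 0 (min (1/2^M) (max 0 (min z (max 0 (max (z - (1 - 1/2^M)) t)))))"
  unfolding clops_def by (simp add: itr_append itr_mn itr_mx min.commute algebra_simps)

lemma clops_bounds:
  assumes "0 \<le> z" "z \<le> 1"
  shows "0 \<le> itr (clops M) z t \<and> itr (clops M) z t \<le> 1/2^M \<and> itr (clops M) z t \<le> z
    \<and> z - (1 - 1/2^M) \<le> itr (clops M) z t"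
proof -
  have "(1::real)/2^M \<le> 1" by simp
  then show ?thesis using assms unfolding itr_clops by (auto simp: max_def min_def)
qed

lemma clops_exact:
  assumes "0 \<le> t" "t \<le> 1/2^M" "t \<le> z" "z - (1 - 1/2^M) \<le> t"
  shows "itr (clops M) z t = t"
  using assms unfolding itr_clops by (auto simp: max_def min_def)

lemma qM_eq:
  assumes "m < 2^M" "real m / 2^M \<le> z" "z < (real m + 1) / 2^M \<or> m = 2^M - 1"
  shows "qM M z = real m / 2^M"
  unfolding qM_def
proof (rule Max_eqI)
  have "grid M = (\<lambda>k. real k / 2^M) ` {..<2^M}" unfolding grid_def by auto
  then show "finite {c \<in> grid M. c \<le> z}" by simp
  show "real m / 2^M \<in> {c \<in> grid M. c \<le> z}" using assms unfolding grid_def by auto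
  fix y assume "y \<in> {c \<in> grid M. c \<le> z}"
  then obtain k where k: "k < 2^M" "y = real k / 2^M" "y \<le> z" unfolding grid_def by auto
  show "y \<le> real m / 2^M"
  proof (rule ccontr)
    assume "\<not> y \<le> real m / 2^M"
    then have "real k > real m" using k by (smt (verit) divide_right_mono zero_le_power)
    then have "k > m" by simp
    then have "real k \<ge> real m + 1" by simp
    then have "(real m + 1) / 2^M \<le> y" using k by (simp add: divide_right_mono)
    then have "m = 2^M - 1" using assms k by auto
    then show False using \<open>k > m\<close> k by auto
  qed
qed

lemma T_exact:
  assumes d: "\<delta> > 0" and z: "0 \<le> z" "z \<le> 1" and m: "m < 2^M" "real m / 2^M \<le> z"
    and mu: "z < (real m + 1) / 2^M \<or> m = 2^M - 1"
    and nD: "\<forall>i\<in>{1..2^M-1::nat}. \<not> (real i / 2^M - \<delta> < z \<and> z < real i / 2^M)"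
  shows "k \<le> 2^M - 1 \<Longrightarrow> foldl (stepf M \<delta> z) z [1..<Suc k] = z - real (min k m) / 2^M"
proof (induction k)
  case 0
  then show ?case by simp
next
  case (Suc k)
  let ?t = "z - real (min k m) / 2^M"
  have IH: "foldl (stepf M \<delta> z) z [1..<Suc k] = ?t" using Suc by simp
  have pos: "(0::real) < 2^M" by simp
  have "foldl (stepf M \<delta> z) z [1..<Suc (Suc k)] = stepf M \<delta> z ?t (Suc k)"
    using IH by simp
  also have "\<dots> = z - real (min (Suc k) m) / 2^M"
  proof (cases "m \<ge> Suc k")
    case True
    have c: "cc M (Suc k) \<le> z" using m True unfolding cc_def
      by (smt (verit) divide_right_mono of_nat_le_iff pos)
    have t: "?t = z - real k / 2^M" using True by simp
    have "?t \<ge> 0" using c unfolding t cc_def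
      by (smt (verit) divide_right_mono of_nat_le_iff pos le_Suc_eq)
    moreover have "KK M \<delta> * (cc M (Suc k) - z) \<le> 0"
      using c d unfolding KK_def by (simp add: divide_nonpos_pos)
    ultimately have "max 0 (min (KK M \<delta> * (cc M (Suc k) - z)) ?t) = 0" by simp
    then show ?thesis using c True unfolding stepf_def by (simp add: cc_def)
  next
    case False
    then have mk: "m \<le> k" by simp
    then have t: "?t = z - real m / 2^M" by simp
    have zlt: "z < (real m + 1) / 2^M" using mu Suc.prems mk by auto
    have "(real m + 1) / 2^M \<le> real (Suc k) / 2^M" using mk
      by (simp add: divide_right_mono)
    then have zc: "z < real (Suc k) / 2^M" using zlt by simp
    have "Suc k \<in> {1..2^M-1}" using Suc.prems by simp
    then have "z \<le> real (Suc k) / 2^M - \<delta>" using nD zc by force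
    then have "KK M \<delta> * (cc M (Suc k) - z) \<ge> KK M \<delta> * \<delta>"
      unfolding cc_def KK_def using d by (intro mult_left_mono) auto
    moreover have "KK M \<delta> * \<delta> = 1 / 2^M" unfolding KK_def using d by simp
    moreover have "?t < 1/2^M" using zlt unfolding t by (simp add: add_divide_distrib)
    moreover have "?t \<ge> 0" using m unfolding t by simp
    moreover have "z - cc M (Suc k) < 0" using zc unfolding cc_def by simp
    ultimately show ?thesis using mk unfolding stepf_def by (simp add: min_def max_def)
  qed
  finally show ?case .
qed

lemma foldr_max2: "\<forall>a\<in>set xs. a = (2::nat) \<Longrightarrow> xs \<noteq> [] \<Longrightarrow> foldr max xs 0 = 2"
proof (induction xs)
  case Nil then show ?case by simp
next
  case (Cons a xs) then show ?case by (cases xs) auto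
qed

lemma m_exists:
  assumes "0 \<le> (x::real)" "x \<le> 1"
  shows "\<exists>m::nat. m < 2^M \<and> real m / 2^M \<le> x \<and> (x < (real m + 1) / 2^M \<or> m = 2^M - 1)"
proof -
  define f where "f = \<lfloor>x * 2^M\<rfloor>"
  have f0: "f \<ge> 0" unfolding f_def using assms by simp
  have f1: "real_of_int f \<le> x * 2^M" "x * 2^M < real_of_int f + 1" unfolding f_def by linarith+
  have rf: "real (nat f) = real_of_int f" using f0 by simp
  have pos: "(0::real) < 2^M" by simp
  have p2: "(2::nat)^M > 0" by simp
  show ?thesis
  proof (cases "nat f \<le> 2^M - 1")
    case True
    have "nat f < 2^M" using True p2 by linarith
    moreover have "real (nat f) / 2^M \<le> x" using f1 rf pos by (simp add: pos_divide_le_eq)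
    moreover have "x < (real (nat f) + 1) / 2^M" using f1 rf pos by (simp add: pos_less_divide_eq)
    ultimately show ?thesis by blast
  next
    case False
    define m where "m = (2::nat)^M - 1"
    have "m < 2^M" using p2 unfolding m_def by linarith
    moreover have "m \<le> nat f" using False unfolding m_def by simp
    then have "real m \<le> real (nat f)" by (simp only: of_nat_le_iff)
    then have "real m / 2^M \<le> x" using f1 rf pos by (simp add: pos_divide_le_eq)
    ultimately show ?thesis unfolding m_def by blast
  qed
qed

definition allops :: "nat \<Rightarrow> real \<Rightarrow> (real \<times> real \<times> real) list" where
  "allops M \<delta> = concat (map (opsk M \<delta>) [1..<2^M]) @ clops M"

definition FF :: "nat \<Rightarrow> real \<Rightarrow> real \<Rightarrow> real" where
  "FF M \<delta> z = itr (clops M) z (foldl (stepf M \<delta> z) z [1..<2^M])"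

lemma realize_eq:
  "realize2 (L1 # L2 # map opl (allops M \<delta>) @ [finl M]) x =
    (let z = max 0 x - max 0 (x - 1) in (z - FF M \<delta> z, 2^M * FF M \<delta> z))"
proof -
  define z where "z = max 0 x - max 0 (x - 1)"
  have z0: "z \<ge> 0" unfolding z_def by simp
  define v where "v = relu_vec (affine_app L2 (relu_vec (affine_app L1 (\<lambda>i. if i = 0 then x else 0))))"
  have v0: "v 0 = z" and v1: "v 1 = z" using z0
    by (simp_all add: v_def z_def relu_vec_def affine_app_def L1_def L2_def lessThan_Suc numeral_2_eq_2)
  have "run_net (L1 # L2 # map opl (allops M \<delta>) @ [finl M]) (\<lambda>i. if i = 0 then x else 0)
      = run_net (map opl (allops M \<delta>) @ [finl M]) v"
    unfolding v_def by (simp add: run_net_cons)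
  moreover have "itr (allops M \<delta>) z z = FF M \<delta> z"
    unfolding allops_def FF_def by (simp add: itr_concat)
  ultimately show ?thesis using run_ops[of v "allops M \<delta>" M] v0 v1 z0
    unfolding realize2_def z_def[symmetric] by (simp add: Let_def)
qed

theorem lemma11:
  fixes M :: nat and \<delta> :: real
  assumes "\<delta> > 0"
  shows "\<exists>N :: layer list. N \<noteq> [] \<and> in_dim N = 1 \<and> width N = 2 \<and>
           (\<forall>x \<in> {0..1} - Dset M \<delta>.
              realize2 N x = (qM M x, 2 ^ M * (x - qM M x))) \<and>
           (\<forall>x :: real. realize2 N x \<in> {0..1 - 1 / 2 ^ M} \<times> {0..1})"
proof (intro exI conjI ballI allI)
  let ?N = "L1 # L2 # map opl (allops M \<delta>) @ [finl M]"
  show "?N \<noteq> []" by simp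
  show "in_dim ?N = 1" by (simp add: in_dim_def L1_def)
  have fo: "fst (opl p) = 2" for p by (cases p) (simp add: opl_def)
  show "width ?N = 2" unfolding width_def
    by (rule foldr_max2) (auto simp: fo L2_def finl_def)
  have p2: "(2::nat)^M > 0" by simp
  have pos: "(0::real) < 2^M" by simp
  fix x :: real
  {
    define z where "z = max 0 x - max 0 (x - 1)"
    have z: "0 \<le> z" "z \<le> 1" unfolding z_def by auto
    note B = clops_bounds[OF z, of M "foldl (stepf M \<delta> z) z [1..<2^M]"]
    have "2^M * FF M \<delta> z \<le> 2^M * (1/2^M)"
      using B unfolding FF_def by (intro mult_left_mono) auto
    then have "2^M * FF M \<delta> z \<le> 1" by simp
    then show "realize2 ?N x \<in> {0..1 - 1 / 2 ^ M} \<times> {0..1}"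
      using B unfolding realize_eq z_def[symmetric] FF_def[symmetric] by (simp add: Let_def)
  }
  assume x: "x \<in> {0..1} - Dset M \<delta>"
  then have x01: "0 \<le> x" "x \<le> 1" by auto
  have zx: "max 0 x - max 0 (x - 1) = x" using x01 by simp
  have nD: "\<forall>i\<in>{1..2^M-1::nat}. \<not> (real i / 2^M - \<delta> < x \<and> x < real i / 2^M)"
    using x unfolding Dset_def by auto
  obtain m where m: "m < 2^M" "real m / 2^M \<le> x" "x < (real m + 1) / 2^M \<or> m = 2^M - 1"
    using m_exists[OF x01] by blast
  have q: "qM M x = real m / 2^M" using qM_eq[OF m] .
  have e: "[1..<2^M] = [1..<Suc (2^M - 1)]" using p2 by simp
  have T: "foldl (stepf M \<delta> x) x [1..<2^M] = x - real m / 2^M"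
    unfolding e using T_exact[OF assms x01 m nD, of "2^M - 1"] m(1) by simp
  have "x - real m / 2^M < 1 / 2^M \<or> m = 2^M - 1" using m(3) by (auto simp: add_divide_distrib)
  moreover have "m = 2^M - 1 \<Longrightarrow> real m = 2^M - 1" using p2 by (simp add: of_nat_diff)
  ultimately have "x - real m / 2^M \<le> 1 / 2^M" using x01 pos by (auto simp: diff_divide_distrib)
  moreover have "real m \<le> 2^M - 1" using m(1) p2
    by (metis Suc_pred' less_Suc_eq_le of_nat_1 of_nat_diff of_nat_le_iff of_nat_numeral of_nat_power one_le_numeral one_le_power)
  then have "real m / 2^M \<le> 1 - 1/2^M" using pos by (simp add: field_simps)
  ultimately have F: "FF M \<delta> x = x - real m / 2^M"
    unfolding FF_def T using m(2) by (intro clops_exact) auto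
  show "realize2 ?N x = (qM M x, 2 ^ M * (x - qM M x))"
    unfolding realize_eq zx q by (simp add: Let_def F)
qed

end
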